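(* Let $\alpha\in(0,1)$ be irrational. Then for every integer $n\ge 1$, $$P_\alpha(n)=\#\bigl\{k\in\{1,\dots,n\}:\ k\alpha-\lfloor k\alpha\rfloor\le n\alpha-\lfloor n\alpha\rfloor\bigr\}.$$
   Context: A Sturmian sequence is an aperiodic (not eventually periodic) $1$-balanced sequence over a two-letter alphabet; here a sequence is $1$-balanced if for any two factors $u,v$ of equal length and each letter $x$, $\bigl||u|_x-|v|_x\bigr|\le 1$. For a finite word $w$ over $\{a,b\}$, its Parikh vector is $\Psi(w)=(|w|_a,|w|_b)^T$. For irrational $\alpha\in(0,1)$, let $\mathbf{u}$ be a Sturmian sequence over $\{a,b\}$ in which the letter $b$ has frequency $\alpha$ (the set of factors of such a sequence depends only on $\alpha$). For $n\ge1$, define $P_\alpha(n)$ as the number of factors $u$ of $\mathbf{u}$ of length $n$ with $\Psi(u)=(\lfloor(1-\alpha)n\rfloor,\lceil n\alpha\rceil)^T$. *)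

theory Defs
  imports Complex_Main
begin

datatype letter = La | Lb

definition factor :: "(nat \<Rightarrow> letter) \<Rightarrow> nat \<Rightarrow> nat \<Rightarrow> letter list" where
  "factor u i n = map u [i..<i+n]"

definition factors_len :: "(nat \<Rightarrow> letter) \<Rightarrow> nat \<Rightarrow> letter list set" where
  "factors_len u n = {w. \<exists>i. w = factor u i n}"

definition occ :: "letter list \<Rightarrow> letter \<Rightarrow> nat" where
  "occ w x = length (filter (\<lambda>y. y = x) w)"

definition balanced1 :: "(nat \<Rightarrow> letter) \<Rightarrow> bool" where
  "balanced1 u \<longleftrightarrow> (\<forall>n v w x. v \<in> factors_len u n \<longrightarrow> w \<in> factors_len u n \<longrightarrow>
      \<bar>int (occ v x) - int (occ w x)\<bar> \<le> 1)"

definition eventually_periodic :: "(nat \<Rightarrow> letter) \<Rightarrow> bool" where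
  "eventually_periodic u \<longleftrightarrow> (\<exists>p>0. \<exists>N. \<forall>i\<ge>N. u (i + p) = u i)"

definition sturmian :: "(nat \<Rightarrow> letter) \<Rightarrow> bool" where
  "sturmian u \<longleftrightarrow> balanced1 u \<and> \<not> eventually_periodic u"

definition has_freq :: "(nat \<Rightarrow> letter) \<Rightarrow> letter \<Rightarrow> real \<Rightarrow> bool" where
  "has_freq u x \<alpha> \<longleftrightarrow> (\<lambda>n. real (occ (factor u 0 n) x) / real n) \<longlonglongrightarrow> \<alpha>"

text \<open>P_alpha(n), computed from a Sturmian sequence u with frequency alpha of b.\<close>
definition P_count :: "(nat \<Rightarrow> letter) \<Rightarrow> real \<Rightarrow> nat \<Rightarrow> nat" where
  "P_count u \<alpha> n = card {w \<in> factors_len u n.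
      int (occ w La) = \<lfloor>(1 - \<alpha>) * real n\<rfloor> \<and> int (occ w Lb) = \<lceil>real n * \<alpha>\<rceil>}"

end

theory Submission
  imports Defs "HOL-Analysis.Kronecker_Approximation_Theorem"
begin

lemma occ_append[simp]: "occ (xs @ ys) x = occ xs x + occ ys x"
  by (simp add: occ_def)

lemma occ_Nil[simp]: "occ [] x = 0"
  by (simp add: occ_def)

lemma occ_single[simp]: "occ [y] x = (if y = x then 1 else 0)"
  by (simp add: occ_def)

lemma factor_add: "factor u i (m + k) = factor u i m @ factor u (i + m) k"
proof -
  have "[i..<i + (m + k)] = [i..<i+m] @ [i+m..<i+m+k]"
    using upt_add_eq_append[of i "i+m" k] by (simp add: add.assoc)
  then show ?thesis by (simp add: factor_def)
qed

lemma length_factor[simp]: "length (factor u i n) = n"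
  by (simp add: factor_def)

lemma occ_La_Lb: "occ w La + occ w Lb = length w"
proof (induction w)
  case Nil then show ?case by simp
next
  case (Cons a w)
  then show ?case by (cases a) (simp_all add: occ_def)
qed

lemma take_factor: "j \<le> n \<Longrightarrow> take j (factor u i n) = factor u i j"
  by (simp add: factor_def take_map)

lemma factor_in: "factor u i n \<in> factors_len u n"
  by (auto simp: factors_len_def)

lemma not_int_mult:
  assumes "\<alpha> \<notin> \<rat>" "(m::nat) \<ge> 1"
  shows "real m * \<alpha> \<notin> \<int>"
proof
  assume "real m * \<alpha> \<in> \<int>"
  then have "real m * \<alpha> \<in> \<rat>" using Ints_subset_Rats by blast
  then have "(real m * \<alpha>) / real m \<in> \<rat>" by (rule Rats_divide[OF _ Rats_of_nat])
  moreover have "(real m * \<alpha>) / real m = \<alpha>" using assms(2) by simp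
  ultimately show False using assms(1) by metis
qed

lemma floor_strict:
  assumes "\<alpha> \<notin> \<rat>" "(m::nat) \<ge> 1"
  shows "of_int \<lfloor>real m * \<alpha>\<rfloor> < real m * \<alpha>"
proof -
  have "of_int \<lfloor>real m * \<alpha>\<rfloor> \<noteq> real m * \<alpha>"
    using not_int_mult[OF assms] by (metis Ints_of_int)
  then show ?thesis by (meson less_le of_int_floor_le)
qed

lemma frac_pos:
  assumes "\<alpha> \<notin> \<rat>" "(m::nat) \<ge> 1"
  shows "frac (real m * \<alpha>) > 0"
  using floor_strict[OF assms] by (simp add: frac_def)

lemma frac_inj:
  assumes "\<alpha> \<notin> \<rat>" "frac (real j * \<alpha>) = frac (real k * \<alpha>)"
  shows "j = k"
proof (rule ccontr)
  assume ne: "j \<noteq> k"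
  have "(real j - real k) * \<alpha> = of_int (\<lfloor>real j * \<alpha>\<rfloor> - \<lfloor>real k * \<alpha>\<rfloor>)"
    using assms(2) by (simp add: frac_def algebra_simps)
  then have "(real j - real k) * \<alpha> \<in> \<rat>" by (metis Rats_of_int)
  moreover have "real j - real k \<noteq> 0" using ne by simp
  ultimately have "((real j - real k) * \<alpha>) / (real j - real k) \<in> \<rat>"
    by (intro Rats_divide) auto
  moreover have "((real j - real k) * \<alpha>) / (real j - real k) = \<alpha>"
    using \<open>real j - real k \<noteq> 0\<close> by simp
  ultimately show False using assms(1) by metis
qed

lemma list_eq_by_occ:
  assumes "length w = n" "length v = n"
    and "\<forall>j\<le>n. occ (take j w) Lb = occ (take j v) Lb"
  shows "w = v"
proof (rule nth_equalityI)
  show "length w = length v" using assms by simp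
  fix p assume p: "p < length w"
  have a: "take (Suc p) w = take p w @ [w!p]" using p by (simp add: take_Suc_conv_app_nth)
  have b: "take (Suc p) v = take p v @ [v!p]" using p assms by (simp add: take_Suc_conv_app_nth)
  have "occ (take (Suc p) w) Lb = occ (take (Suc p) v) Lb"
       "occ (take p w) Lb = occ (take p v) Lb" using assms p by auto
  then have "(w!p = Lb) = (v!p = Lb)" using a b by (auto split: if_splits)
  then show "w!p = v!p" by (cases "w!p"; cases "v!p") auto
qed


locale stu =
  fixes u :: "nat \<Rightarrow> letter" and \<alpha> :: real
  assumes irr: "\<alpha> \<notin> \<rat>" and bal: "balanced1 u" and freq: "has_freq u Lb \<alpha>"
begin

definition c :: "nat \<Rightarrow> nat" where "c i = occ (factor u 0 i) Lb"

lemma c_add: "c (i + j) = c i + occ (factor u i j) Lb"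
  using factor_add[of u 0 i j] by (simp add: c_def)

lemma bal_pair: "int (occ (factor u j m) Lb) \<le> int (occ (factor u i m) Lb) + 1"
proof -
  have "\<bar>int (occ (factor u j m) Lb) - int (occ (factor u i m) Lb)\<bar> \<le> 1"
    using bal factor_in unfolding balanced1_def by blast
  then show ?thesis by linarith
qed

lemma cnt_bounds:
  assumes m: "m \<ge> 1"
  shows "int (occ (factor u i m) Lb) = \<lfloor>real m * \<alpha>\<rfloor> \<or>
         int (occ (factor u i m) Lb) = \<lfloor>real m * \<alpha>\<rfloor> + 1"
proof -
  define a where "a = occ (factor u i m) Lb"
  have up1: "occ (factor u j m) Lb \<le> a + 1" for j
    using bal_pair[of j m i] unfolding a_def by linarith
  have lo1: "a \<le> occ (factor u j m) Lb + 1" for j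
    using bal_pair[of i m j] unfolding a_def by linarith
  have up: "c (q * m) \<le> q * (a + 1)" for q
  proof (induction q)
    case 0 then show ?case by (simp add: c_def factor_def)
  next
    case (Suc q)
    have "c (Suc q * m) = c (q * m) + occ (factor u (q*m) m) Lb"
      using c_add[of "q*m" m] by (simp add: add.commute)
    then show ?case using Suc up1[of "q*m"] by simp
  qed
  have lo: "q * a \<le> c (q * m) + q" for q
  proof (induction q)
    case 0 then show ?case by (simp add: c_def factor_def)
  next
    case (Suc q)
    have "c (Suc q * m) = c (q * m) + occ (factor u (q*m) m) Lb"
      using c_add[of "q*m" m] by (simp add: add.commute)
    then show ?case using Suc lo1[of "q*m"] by simp
  qed
  have lim0: "(\<lambda>N. real (c N) / real N) \<longlonglongrightarrow> \<alpha>"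
    using freq by (simp add: has_freq_def c_def)
  have sm: "strict_mono (\<lambda>q. q * m)" using m by (auto simp: strict_mono_def)
  have lim: "(\<lambda>q. real (c (q*m)) / real (q*m)) \<longlonglongrightarrow> \<alpha>"
    using LIMSEQ_subseq_LIMSEQ[OF lim0 sm] by (simp add: o_def)
  have "\<alpha> \<le> (real a + 1) / real m"
  proof (rule LIMSEQ_le_const2[OF lim], intro exI allI impI)
    fix q :: nat assume q: "q \<ge> 1"
    have "real (c (q*m)) \<le> real q * (real a + 1)" using up[of q]
      by (metis of_nat_1 of_nat_add of_nat_mono of_nat_mult)
    then have "real (c (q*m)) / real (q*m) \<le> real q * (real a + 1) / real (q*m)"
      by (intro divide_right_mono) auto
    also have "\<dots> = (real a + 1) / real m" using q by simp
    finally show "real (c (q*m)) / real (q*m) \<le> (real a + 1) / real m" .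
  qed
  then have A: "real m * \<alpha> \<le> real a + 1" using m by (simp add: field_simps)
  have "(real a - 1) / real m \<le> \<alpha>"
  proof (rule LIMSEQ_le_const[OF lim], intro exI allI impI)
    fix q :: nat assume q: "q \<ge> 1"
    have "real q * real a \<le> real (c (q*m)) + real q" using lo[of q]
      by (metis of_nat_add of_nat_mono of_nat_mult)
    then have "real q * (real a - 1) \<le> real (c (q*m))" by (simp add: algebra_simps)
    then have "real q * (real a - 1) / real (q*m) \<le> real (c (q*m)) / real (q*m)"
      by (intro divide_right_mono) auto
    moreover have "real q * (real a - 1) / real (q*m) = (real a - 1) / real m" using q by simp
    ultimately show "(real a - 1) / real m \<le> real (c (q*m)) / real (q*m)" by simp
  qed
  then have B: "real a - 1 \<le> real m * \<alpha>" using m by (simp add: field_simps)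
  have ni: "real m * \<alpha> \<notin> \<int>" by (rule not_int_mult[OF irr m])
  have A': "real m * \<alpha> < real a + 1"
    using A ni by (metis Ints_of_nat Ints_1 Ints_add order_le_less)
  have B': "real a - 1 < real m * \<alpha>"
    using B ni by (metis Ints_of_nat Ints_1 Ints_diff order_le_less)
  have "\<lfloor>real m * \<alpha>\<rfloor> \<ge> int a - 1"
    using B' by (simp add: le_floor_iff)
  moreover have "\<lfloor>real m * \<alpha>\<rfloor> \<le> int a"
    using A' by (simp add: floor_le_iff)
  ultimately show ?thesis unfolding a_def by linarith
qed

definition d :: "nat \<Rightarrow> real" where "d i = real (c i) - real i * \<alpha>"

lemma d_step: "d (i + m) - d i = real (occ (factor u i m) Lb) - real m * \<alpha>"
  using c_add[of i m] by (simp add: d_def algebra_simps)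

lemma d_close_le: assumes "i \<le> j" shows "\<bar>d j - d i\<bar> < 1"
proof -
  obtain m where j: "j = i + m" using assms le_Suc_ex by blast
  show ?thesis
  proof (cases "m = 0")
    case True then show ?thesis using j by simp
  next
    case False
    then have m: "m \<ge> 1" by simp
    have f1: "of_int \<lfloor>real m * \<alpha>\<rfloor> < real m * \<alpha>" by (rule floor_strict[OF irr m])
    have f2: "real m * \<alpha> < of_int \<lfloor>real m * \<alpha>\<rfloor> + 1" by linarith
    have "real (occ (factor u i m) Lb) = of_int \<lfloor>real m * \<alpha>\<rfloor> \<or>
          real (occ (factor u i m) Lb) = of_int \<lfloor>real m * \<alpha>\<rfloor> + 1"
      using cnt_bounds[OF m, of i] by (metis of_int_1 of_int_add of_int_of_nat_eq)
    then show ?thesis unfolding j abs_less_iff using d_step[of i m] f1 f2 by (elim disjE) linarith+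
  qed
qed

lemma d_close: "\<bar>d j - d i\<bar> < 1"
  using d_close_le[of i j] d_close_le[of j i] by (cases "i \<le> j") auto

definition t :: real where "t = Inf (range d)"

lemma bdd: "bdd_below (range d)"
proof (rule bdd_belowI)
  fix x assume "x \<in> range d"
  then obtain i where "x = d i" by auto
  then show "d 0 - 1 \<le> x" using d_close[of i 0] by auto
qed

lemma t_le: "t \<le> d i"
  unfolding t_def by (rule cInf_lower[OF _ bdd]) simp

lemma le_t1: "d i \<le> t + 1"
proof -
  have "d i - 1 \<le> t" unfolding t_def
  proof (rule cInf_greatest)
    show "range d \<noteq> {}" by simp
    fix x assume "x \<in> range d"
    then obtain j where "x = d j" by auto
    then show "d i - 1 \<le> x" using d_close[of j i] by auto
  qed
  then show ?thesis by simp
qed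

definition y :: "nat \<Rightarrow> real" where "y i = d i - t"

lemma y_bounds: "0 \<le> y i" "y i \<le> 1"
  using t_le[of i] le_t1[of i] by (auto simp: y_def)

lemma cnt_y: "real (occ (factor u i j) Lb) = y (i + j) - y i + real j * \<alpha>"
  using d_step[of i j] by (simp add: y_def)

lemma cnt_hi:
  assumes j: "j \<ge> 1" and lt: "y i < frac (real j * \<alpha>)"
  shows "int (occ (factor u i j) Lb) = \<lfloor>real j * \<alpha>\<rfloor> + 1"
proof -
  have "real (occ (factor u i j) Lb) > of_int \<lfloor>real j * \<alpha>\<rfloor>"
    using cnt_y[of i j] y_bounds[of "i+j"] lt by (simp add: frac_def)
  then have "int (occ (factor u i j) Lb) \<noteq> \<lfloor>real j * \<alpha>\<rfloor>" by auto
  then show ?thesis using cnt_bounds[OF j, of i] by blast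
qed

lemma cnt_lo:
  assumes j: "j \<ge> 1" and lt: "frac (real j * \<alpha>) < y i"
  shows "int (occ (factor u i j) Lb) = \<lfloor>real j * \<alpha>\<rfloor>"
proof -
  have "real (occ (factor u i j) Lb) < of_int \<lfloor>real j * \<alpha>\<rfloor> + 1"
    using cnt_y[of i j] y_bounds[of "i+j"] lt by (simp add: frac_def)
  then have "int (occ (factor u i j) Lb) \<noteq> \<lfloor>real j * \<alpha>\<rfloor> + 1" by auto
  then show ?thesis using cnt_bounds[OF j, of i] by blast
qed

lemma density:
  assumes "0 \<le> lo" "lo < hi" "hi \<le> 1"
  shows "\<exists>i. lo < y i \<and> y i < hi"
proof -
  have na: "- \<alpha> \<notin> \<rat>" using irr by simp
  have eps: "(hi - lo) / 2 > 0" using assms by simp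
  obtain h k where k: "k > 0"
    and hk: "\<bar>of_int k * (- \<alpha>) - of_int h - ((lo + hi) / 2 + t)\<bar> < (hi - lo) / 2"
    using sequence_of_fractional_parts_is_dense[OF na eps] by metis
  define i where "i = nat k"
  have ri: "real i = of_int k" using k by (simp add: i_def)
  define e where "e = of_int k * (- \<alpha>) - of_int h - ((lo + hi) / 2 + t)"
  define z where "z = int (c i) + h"
  have yz: "y i = of_int z + (lo + hi) / 2 + e"
    unfolding y_def d_def z_def e_def using ri by (simp add: algebra_simps)
  have e1: "\<bar>e\<bar> < (hi - lo) / 2" using hk e_def by simp
  have e2: "-(hi-lo)/2 < e" "e < (hi-lo)/2" using e1 by linarith+
  have "of_int z > (-1::real)" using yz e2 y_bounds[of i] assms by (simp add: field_simps)
  moreover have "of_int z < (1::real)" using yz e2 y_bounds[of i] assms by (simp add: field_simps)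
  ultimately have "z = 0" by linarith
  then have "y i = (lo + hi) / 2 + e" using yz by simp
  then show ?thesis using e2 by (intro exI[of _ i]) (simp add: field_simps)
qed

lemma main:
  assumes n: "n \<ge> 1"
  shows "card {w \<in> factors_len u n. int (occ w Lb) = \<lfloor>real n * \<alpha>\<rfloor> + 1} =
         card {k \<in> {1..n}. frac (real k * \<alpha>) \<le> frac (real n * \<alpha>)}"
proof -
  define fr where "fr k = frac (real k * \<alpha>)" for k
  define K where "K = {k \<in> {1..n}. fr k \<le> fr n}"
  define H where "H = {w \<in> factors_len u n. int (occ w Lb) = \<lfloor>real n * \<alpha>\<rfloor> + 1}"
  have frinj: "fr j = fr k \<Longrightarrow> j = k" for j k using frac_inj[OF irr] by (simp add: fr_def)
  have ex: "\<exists>i. y i < fr k \<and> (\<forall>j\<in>{1..n}. fr j < fr k \<longrightarrow> fr j < y i)" if k: "k \<in> K" for k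
  proof -
    define S where "S = insert 0 (fr ` {j\<in>{1..n}. fr j < fr k})"
    define lo where "lo = Max S"
    have fin: "finite S" by (simp add: S_def)
    have k1: "k \<ge> 1" using k K_def by auto
    have fk: "fr k > 0" using frac_pos[OF irr k1] fr_def by simp
    have lo_lt: "lo < fr k" unfolding lo_def using fin fk by (auto simp: S_def Max_less_iff)
    have lo_ge: "0 \<le> lo" unfolding lo_def using fin by (auto simp: S_def)
    have f1: "fr k \<le> 1" using frac_lt_1[of "real k * \<alpha>"] by (simp add: fr_def)
    obtain i where i: "lo < y i" "y i < fr k" using density[OF lo_ge lo_lt f1] by auto
    have "fr j \<le> lo" if "j\<in>{1..n}" "fr j < fr k" for j
      unfolding lo_def using fin that by (auto simp: S_def)
    then show ?thesis using i by force
  qed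
  define I where "I k = (SOME i. y i < fr k \<and> (\<forall>j\<in>{1..n}. fr j < fr k \<longrightarrow> fr j < y i))" for k
  have I: "y (I k) < fr k" "\<forall>j\<in>{1..n}. fr j < fr k \<longrightarrow> fr j < y (I k)" if "k \<in> K" for k
    using someI_ex[OF ex[OF that]] unfolding I_def by auto
  define g where "g k = factor u (I k) n" for k
  have cntg: "int (occ (take j (g k)) Lb) = \<lfloor>real j * \<alpha>\<rfloor> + (if fr k \<le> fr j then 1 else 0)"
    if "k \<in> K" "j \<in> {1..n}" for k j
  proof -
    have tk: "take j (g k) = factor u (I k) j" using that by (simp add: g_def take_factor)
    have j1: "j \<ge> 1" using that by simp
    show ?thesis
    proof (cases "fr k \<le> fr j")
      case True
      then have "y (I k) < frac (real j * \<alpha>)" using I(1)[OF that(1)] fr_def by simp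
      then show ?thesis using cnt_hi[OF j1] tk True by simp
    next
      case False
      then have "frac (real j * \<alpha>) < y (I k)" using I(2)[OF that(1)] that(2) fr_def by auto
      then show ?thesis using cnt_lo[OF j1] tk False by simp
    qed
  qed
  have gH: "g k \<in> H" if "k \<in> K" for k
  proof -
    have "n \<in> {1..n}" using n by simp
    from cntg[OF that this] that have "int (occ (take n (g k)) Lb) = \<lfloor>real n * \<alpha>\<rfloor> + 1"
      by (simp add: K_def)
    then show ?thesis by (simp add: H_def g_def factor_in)
  qed
  have inj: "inj_on g K"
  proof (rule inj_onI)
    fix k k' assume kk: "k \<in> K" "k' \<in> K" "g k = g k'"
    have k1: "k \<in> {1..n}" "k' \<in> {1..n}" using kk K_def by auto
    have "fr k' \<le> fr k" using cntg[OF kk(1) k1(1)] cntg[OF kk(2) k1(1)] kk(3)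
      by (auto split: if_splits)
    moreover have "fr k \<le> fr k'" using cntg[OF kk(1) k1(2)] cntg[OF kk(2) k1(2)] kk(3)
      by (auto split: if_splits)
    ultimately show "k = k'" using frinj by (meson order_antisym)
  qed
  have surj: "H \<subseteq> g ` K"
  proof
    fix w assume w: "w \<in> H"
    then obtain i where wi: "w = factor u i n" by (auto simp: H_def factors_len_def)
    define S where "S = {j\<in>{1..n}. int (occ (take j w) Lb) = \<lfloor>real j * \<alpha>\<rfloor> + 1}"
    have nS: "n \<in> S" using w n by (simp add: S_def H_def wi)
    have finS: "finite S" by (simp add: S_def)
    define m where "m = Min (fr ` S)"
    have "m \<in> fr ` S" unfolding m_def using finS nS by (intro Min_in) auto
    then obtain k where kS: "k \<in> S" and km: "fr k = m" by auto
    have kmin: "\<forall>j\<in>S. fr k \<le> fr j" using km finS unfolding m_def by auto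
    have kK: "k \<in> K" using kS kmin nS by (auto simp: K_def S_def)
    have "w = g k"
    proof (rule list_eq_by_occ[of w n])
      show "length w = n" "length (g k) = n" by (simp_all add: wi g_def)
      show "\<forall>j\<le>n. occ (take j w) Lb = occ (take j (g k)) Lb"
      proof (intro allI impI)
        fix j assume jn: "j \<le> n"
        show "occ (take j w) Lb = occ (take j (g k)) Lb"
        proof (cases "j = 0")
          case True then show ?thesis by simp
        next
          case False
          then have j: "j \<in> {1..n}" "j \<ge> 1" using jn by auto
          have tw: "take j w = factor u i j" using jn by (simp add: wi take_factor)
          have iff: "j \<in> S \<longleftrightarrow> fr k \<le> fr j"
          proof
            assume "j \<in> S" then show "fr k \<le> fr j" using kmin by auto
          next
            assume le: "fr k \<le> fr j"
            show "j \<in> S"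
            proof (cases "fr k = fr j")
              case True then have "k = j" using frinj by metis
              then show ?thesis using kS by simp
            next
              case False
              with le have lt: "fr k < fr j" by simp
              have k1: "k \<ge> 1" "k \<le> n" using kS S_def by auto
              have tk: "take k w = factor u i k" using k1 by (simp add: wi take_factor)
              have "\<not> (frac (real k * \<alpha>) < y i)"
              proof
                assume "frac (real k * \<alpha>) < y i"
                then have "int (occ (factor u i k) Lb) = \<lfloor>real k * \<alpha>\<rfloor>" by (rule cnt_lo[OF k1(1)])
                then show False using kS tk S_def by auto
              qed
              then have "y i < frac (real j * \<alpha>)" using lt fr_def by auto
              then show "j \<in> S" using cnt_hi[OF j(2), of i] tw j S_def by auto
            qed
          qed
          have "int (occ (take j w) Lb) = \<lfloor>real j * \<alpha>\<rfloor> + (if fr k \<le> fr j then 1 else 0)"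
          proof (cases "j \<in> S")
            case True then show ?thesis using iff S_def by auto
          next
            case False
            then show ?thesis using iff cnt_bounds[OF j(2), of i] tw S_def j by auto
          qed
          then show ?thesis using cntg[OF kK j(1)] by simp
        qed
      qed
    qed
    then show "w \<in> g ` K" using kK by blast
  qed
  have "bij_betw g K H" unfolding bij_betw_def using inj gH surj by blast
  then have "card K = card H" by (rule bij_betw_same_card)
  then show ?thesis unfolding H_def K_def fr_def by simp
qed

end

theorem lemma2:
  fixes u :: "nat \<Rightarrow> letter" and \<alpha> :: real and n :: nat
  assumes "\<alpha> \<notin> \<rat>" and "0 < \<alpha>" and "\<alpha> < 1"
    and "sturmian u" and "has_freq u Lb \<alpha>"
    and "n \<ge> 1"
  shows "P_count u \<alpha> n =
    card {k \<in> {1..n}. real k * \<alpha> - \<lfloor>real k * \<alpha>\<rfloor> \<le> real n * \<alpha> - \<lfloor>real n * \<alpha>\<rfloor>}"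
proof -
  interpret stu u \<alpha>
    using assms by unfold_locales (auto simp: sturmian_def)
  have fs: "of_int \<lfloor>real n * \<alpha>\<rfloor> < real n * \<alpha>" by (rule floor_strict[OF assms(1) assms(6)])
  have ceq: "\<lceil>real n * \<alpha>\<rceil> = \<lfloor>real n * \<alpha>\<rfloor> + 1"
    using fs by (simp add: ceiling_altdef)
  have feq: "\<lfloor>(1 - \<alpha>) * real n\<rfloor> = int n - \<lfloor>real n * \<alpha>\<rfloor> - 1"
  proof (rule floor_unique)
    have "real n * \<alpha> < of_int \<lfloor>real n * \<alpha>\<rfloor> + 1" by linarith
    then show "of_int (int n - \<lfloor>real n * \<alpha>\<rfloor> - 1) \<le> (1 - \<alpha>) * real n"
      by (simp add: algebra_simps)
    show "(1 - \<alpha>) * real n < of_int (int n - \<lfloor>real n * \<alpha>\<rfloor> - 1) + 1"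
      using fs by (simp add: algebra_simps)
  qed
  have seteq: "{w \<in> factors_len u n.
      int (occ w La) = \<lfloor>(1 - \<alpha>) * real n\<rfloor> \<and> int (occ w Lb) = \<lceil>real n * \<alpha>\<rceil>}
    = {w \<in> factors_len u n. int (occ w Lb) = \<lfloor>real n * \<alpha>\<rfloor> + 1}"
  proof -
    have "length w = n" if "w \<in> factors_len u n" for w
      using that by (auto simp: factors_len_def)
    moreover have "int (occ w La) = int n - int (occ w Lb)" if "length w = n" for w
      using occ_La_Lb[of w] that by simp
    ultimately show ?thesis unfolding ceq feq by auto
  qed
  show ?thesis
    unfolding P_count_def seteq main[OF assms(6)] frac_def by simp
qed

end
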